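(* Let $\mu_1,\mu_2\in M_+(\mathbb T)$. For every $f\in\mathcal D(\mu_1,\mu_2)$, the functions $(z_1,z_2)\mapsto f(z_1,0)$ and $(z_1,z_2)\mapsto f(0,z_2)$ belong to $\mathcal D(\mu_1,\mu_2)$. Moreover, the maps $f\mapsto f(\cdot,0)$ and $f\mapsto f(0,\cdot)$ from $\mathcal D(\mu_1,\mu_2)$ into itself are contractive (linear) homomorphisms.
   Context: $\mathbb D$ is the open unit disc, $\mathbb T$ the unit circle, $\mathcal O(\mathbb D^2)$ the holomorphic functions on $\mathbb D^2$, $M_+(\mathbb T)$ the finite positive Borel measures on $\mathbb T$. Integrals $\int_{\mathbb T}\cdots d\theta$ are over $\theta\in[0,2\pi]$ with respect to $d\theta/2\pi$; $dA$ is normalized area measure on $\mathbb D$; $P_\mu(w)=\int_{\mathbb T}\frac{1-|w|^2}{|w-\zeta|^2}d\mu(\zeta)$. $H^2(\mathbb D^2)$ is the space of $f=\sum a_{m,n}z_1^mz_2^n\in\mathcal O(\mathbb D^2)$ with $\|f\|^2_{H^2}=\sum|a_{m,n}|^2<\infty$. For $f\in\mathcal O(\mathbb D^2)$, $D_{\mu_1,\mu_2}(f)=\sup_{0<r<1}\int_{\mathbb T}\int_{\mathbb D}|\partial_1f(z_1,re^{i\theta})|^2P_{\mu_1}(z_1)dA(z_1)d\theta+\sup_{0<r<1}\int_{\mathbb T}\int_{\mathbb D}|\partial_2f(re^{i\theta},z_2)|^2P_{\mu_2}(z_2)dA(z_2)d\theta$. If $\mu_1=0$ or $\mu_2=0$,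 $\mathcal D(\mu_1,\mu_2)=\{f\in H^2(\mathbb D^2):D_{\mu_1,\mu_2}(f)<\infty\}$, otherwise $\mathcal D(\mu_1,\mu_2)=\{f\in\mathcal O(\mathbb D^2):D_{\mu_1,\mu_2}(f)<\infty\}$; it is a Hilbert space (contained in $H^2(\mathbb D^2)$) with norm $\|f\|^2=\|f\|^2_{H^2}+D_{\mu_1,\mu_2}(f)$. *)

theory Defs
  imports "HOL-Analysis.Analysis"
begin

text \<open>Functions on the bidisc are modelled as functions complex * complex to complex;
  only their values on the bidisc matter.\<close>

text \<open>Holomorphic functions on the bidisc: continuous and holomorphic in each variable
  separately (Osgood's definition).\<close>
definition holo2 :: "(complex \<times> complex \<Rightarrow> complex) \<Rightarrow> bool" where
  "holo2 f \<longleftrightarrow> continuous_on (ball 0 1 \<times> ball 0 1) f \<and>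
     (\<forall>w\<in>ball 0 1. (\<lambda>z. f (z, w)) holomorphic_on ball 0 1) \<and>
     (\<forall>z\<in>ball 0 1. (\<lambda>w. f (z, w)) holomorphic_on ball 0 1)"

definition coeff2 :: "(complex \<times> complex \<Rightarrow> complex) \<Rightarrow> nat \<Rightarrow> nat \<Rightarrow> complex" where
  "coeff2 f m n = ((deriv ^^ m) (\<lambda>z1. (deriv ^^ n) (\<lambda>z2. f (z1, z2)) 0) 0)
                   / (of_nat (fact m) * of_nat (fact n))"

definition H2norm2 :: "(complex \<times> complex \<Rightarrow> complex) \<Rightarrow> ennreal" where
  "H2norm2 f = infsum (\<lambda>(m, n). ennreal ((cmod (coeff2 f m n))\<^sup>2)) UNIV"

definition inH2 :: "(complex \<times> complex \<Rightarrow> complex) \<Rightarrow> bool" where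
  "inH2 f \<longleftrightarrow> holo2 f \<and> H2norm2 f < \<infinity>"

text \<open>Finite positive Borel measures on the unit circle (as Borel measures on the plane
  concentrated on the circle).\<close>
definition Mplus_T :: "complex measure \<Rightarrow> bool" where
  "Mplus_T \<mu> \<longleftrightarrow> sets \<mu> = sets (borel :: complex measure) \<and> finite_measure \<mu> \<and>
                   emeasure \<mu> (- sphere 0 1) = 0"

definition zero_meas :: "complex measure \<Rightarrow> bool" where
  "zero_meas \<mu> \<longleftrightarrow> emeasure \<mu> (space \<mu>) = 0"

definition Poisson :: "complex measure \<Rightarrow> complex \<Rightarrow> ennreal" where
  "Poisson \<mu> w = (\<integral>\<^sup>+ \<zeta>. ennreal ((1 - (cmod w)\<^sup>2) / (cmod (w - \<zeta>))\<^sup>2) \<partial>\<mu>)"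

text \<open>Normalised area measure dA = dx dy / pi on the disc; d\<theta>/2pi on [0,2pi].\<close>
definition Dint1 :: "complex measure \<Rightarrow> (complex \<times> complex \<Rightarrow> complex) \<Rightarrow> real \<Rightarrow> ennreal" where
  "Dint1 \<mu> f r = ennreal (1 / (2 * pi)) *
     (\<integral>\<^sup>+ \<theta>. indicator {0..2*pi} \<theta> * (ennreal (1 / pi) *
        (\<integral>\<^sup>+ z. indicator (ball 0 1) z *
            ennreal ((cmod (deriv (\<lambda>u. f (u, r * cis \<theta>)) z))\<^sup>2) * Poisson \<mu> z \<partial>lborel)) \<partial>lborel)"

definition Dint2 :: "complex measure \<Rightarrow> (complex \<times> complex \<Rightarrow> complex) \<Rightarrow> real \<Rightarrow> ennreal" where
  "Dint2 \<mu> f r = ennreal (1 / (2 * pi)) *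
     (\<integral>\<^sup>+ \<theta>. indicator {0..2*pi} \<theta> * (ennreal (1 / pi) *
        (\<integral>\<^sup>+ z. indicator (ball 0 1) z *
            ennreal ((cmod (deriv (\<lambda>u. f (r * cis \<theta>, u)) z))\<^sup>2) * Poisson \<mu> z \<partial>lborel)) \<partial>lborel)"

definition Dmu :: "complex measure \<Rightarrow> complex measure \<Rightarrow> (complex \<times> complex \<Rightarrow> complex) \<Rightarrow> ennreal" where
  "Dmu \<mu>1 \<mu>2 f = (SUP r\<in>{0<..<1}. Dint1 \<mu>1 f r) + (SUP r\<in>{0<..<1}. Dint2 \<mu>2 f r)"

definition Dspace :: "complex measure \<Rightarrow> complex measure \<Rightarrow> (complex \<times> complex \<Rightarrow> complex) set" where
  "Dspace \<mu>1 \<mu>2 = {f. (if zero_meas \<mu>1 \<or> zero_meas \<mu>2 then inH2 f else holo2 f) \<and> Dmu \<mu>1 \<mu>2 f < \<infinity>}"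

definition Dnorm2 :: "complex measure \<Rightarrow> complex measure \<Rightarrow> (complex \<times> complex \<Rightarrow> complex) \<Rightarrow> ennreal" where
  "Dnorm2 \<mu>1 \<mu>2 f = H2norm2 f + Dmu \<mu>1 \<mu>2 f"

definition restr1 :: "(complex \<times> complex \<Rightarrow> complex) \<Rightarrow> complex \<times> complex \<Rightarrow> complex" where
  "restr1 f = (\<lambda>(z1, z2). f (z1, 0))"

definition restr2 :: "(complex \<times> complex \<Rightarrow> complex) \<Rightarrow> complex \<times> complex \<Rightarrow> complex" where
  "restr2 f = (\<lambda>(z1, z2). f (0, z2))"

end

theory Submission
  imports Defs "HOL-Complex_Analysis.Complex_Analysis"
begin

lemma coeff2_restr1: "coeff2 (restr1 f) m n = (if n = 0 then coeff2 f m 0 else 0)"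
  by (simp add: coeff2_def restr1_def)

lemma coeff2_restr2: "coeff2 (restr2 f) m n = (if m = 0 then coeff2 f 0 n else 0)"
  by (simp add: coeff2_def restr2_def)

lemma H2_restr1: "H2norm2 (restr1 f) \<le> H2norm2 f"
  unfolding H2norm2_def
  by (intro infsum_mono nonneg_summable_on_complete) (auto simp: coeff2_restr1)

lemma H2_restr2: "H2norm2 (restr2 f) \<le> H2norm2 f"
  unfolding H2norm2_def
  by (intro infsum_mono nonneg_summable_on_complete) (auto simp: coeff2_restr2)

definition swp :: "(complex \<times> complex \<Rightarrow> complex) \<Rightarrow> complex \<times> complex \<Rightarrow> complex" where
  "swp f = (\<lambda>(a, b). f (b, a))"

lemma holo2_swp: "holo2 f \<Longrightarrow> holo2 (swp f)"
  unfolding holo2_def swp_def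
proof (elim conjE, intro conjI)
  assume c: "continuous_on (ball 0 1 \<times> ball 0 1) f"
  have "continuous_on (ball 0 1 \<times> ball 0 1) (f \<circ> prod.swap)"
    by (rule continuous_on_compose[OF continuous_on_swap]) (auto intro: continuous_on_subset[OF c])
  then show "continuous_on (ball 0 1 \<times> ball 0 1) (\<lambda>(a, b). f (b, a))"
    by (simp add: o_def case_prod_unfold prod.swap_def)
qed auto

lemma holo2_restr1: "holo2 f \<Longrightarrow> holo2 (restr1 f)"
  unfolding holo2_def restr1_def
proof (elim conjE, intro conjI)
  assume c: "continuous_on (ball 0 1 \<times> ball 0 1) f"
  have "continuous_on (ball 0 1 \<times> ball 0 1) (f \<circ> (\<lambda>p. (fst p, 0)))"
    by (rule continuous_on_compose[OF _ continuous_on_subset[OF c]]) (auto intro!: continuous_intros)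
  then show "continuous_on (ball 0 1 \<times> ball 0 1) (\<lambda>(z1, z2). f (z1, 0))"
    by (simp add: o_def case_prod_unfold)
qed auto

lemma restr2_swp: "restr2 f = swp (restr1 (swp f))"
  by (simp add: restr2_def restr1_def swp_def)

lemma holo2_restr2: "holo2 f \<Longrightarrow> holo2 (restr2 f)"
  by (simp add: restr2_swp holo2_swp holo2_restr1)

lemma Dint2_swp: "Dint2 \<mu> f r = Dint1 \<mu> (swp f) r"
  by (simp add: Dint1_def Dint2_def swp_def)

lemma Dint2_restr1: "Dint2 \<mu> (restr1 f) r = 0"
  by (simp add: Dint2_def restr1_def)

lemma Dint1_restr2: "Dint1 \<mu> (restr2 f) r = 0"
  by (simp add: Dint1_def restr2_def)

lemma Dint2_restr2: "Dint2 \<mu> (restr2 f) r = Dint1 \<mu> (restr1 (swp f)) r"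
  by (simp add: Dint2_swp restr2_swp swp_def case_prod_unfold)

lemma sub_mean:
  assumes h: "h holomorphic_on ball 0 1" and r: "0 < r" "r < 1"
  shows "ennreal ((cmod (h 0))\<^sup>2) \<le> ennreal (1/(2*pi)) *
     (\<integral>\<^sup>+ \<theta>. indicator {0..2*pi} \<theta> * ennreal ((cmod (h (complex_of_real r * cis \<theta>)))\<^sup>2) \<partial>lborel)"
proof -
  define g where "g = (\<lambda>u. (h u)^2)"
  have gh: "g holomorphic_on ball 0 1" unfolding g_def using h by (intro holomorphic_intros)
  have sub: "cball 0 r \<subseteq> ball (0::complex) 1" using r by auto
  have "((\<lambda>u. g u/(u-0)) has_contour_integral (2 * of_real pi * \<i> * g 0)) (circlepath 0 r)"
    by (rule Cauchy_integral_circlepath)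
       (use r sub gh in \<open>auto intro: holomorphic_on_imp_continuous_on holomorphic_on_subset\<close>)
  then have "((\<lambda>t. g (0 + r * cis t)/(0 + r * cis t - 0) * r * \<i> * cis t) has_integral (2 * of_real pi * \<i> * g 0)) {0..2*pi}"
    unfolding circlepath_def by (subst (asm) has_contour_integral_part_circlepath_iff) auto
  moreover have "(\<lambda>t. g (0 + r * cis t)/(0 + r * cis t - 0) * r * \<i> * cis t) = (\<lambda>t. \<i> * g (r * cis t))"
    using r by (auto simp: field_simps)
  ultimately have "((\<lambda>t. \<i> * g (r * cis t)) has_integral (2 * of_real pi * \<i> * g 0)) {0..2*pi}"
    by metis
  from has_integral_mult_right[OF this, of "-\<i>"]
  have I0: "((\<lambda>t. -\<i> * (\<i> * g (r * cis t))) has_integral (- \<i> * (2 * complex_of_real pi * \<i> * g 0))) {0..2*pi}" .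
  have e1: "- \<i> * (2 * complex_of_real pi * \<i> * g 0) = 2 * of_real pi * g 0"
    by (simp add: algebra_simps)
  have e2: "(\<lambda>t. -\<i> * (\<i> * g (r * cis t))) = (\<lambda>t. g (r * cis t))"
    by (simp add: algebra_simps)
  from I0 have I: "((\<lambda>t. g (r * cis t)) has_integral (2 * of_real pi * g 0)) {0..2*pi}"
    by (simp only: e1 e2)
  have contG: "continuous_on {0..2*pi} (\<lambda>t. (cmod (h (r * cis t)))\<^sup>2)"
  proof -
    have "continuous_on (ball 0 1) h" using h by (rule holomorphic_on_imp_continuous_on)
    moreover have "continuous_on {0..2*pi} (\<lambda>t. complex_of_real r * cis t)"
      by (intro continuous_intros)
    moreover have "(\<lambda>t. complex_of_real r * cis t) ` {0..2*pi} \<subseteq> ball 0 1"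
      using r by (auto simp: norm_mult)
    ultimately have "continuous_on {0..2*pi} (\<lambda>t. h (complex_of_real r * cis t))"
      by (rule continuous_on_compose2)
    then show ?thesis by (intro continuous_intros)
  qed
  then have intG: "(\<lambda>t. (cmod (h (r * cis t)))\<^sup>2) integrable_on {0..2*pi}"
    by (rule integrable_continuous_real)
  have "norm (integral {0..2*pi} (\<lambda>t. g (r * cis t))) \<le> integral {0..2*pi} (\<lambda>t. (cmod (h (r * cis t)))\<^sup>2)"
    by (rule integral_norm_bound_integral) (use I intG in \<open>auto simp: g_def norm_power\<close>)
  then have le: "2 * pi * (cmod (h 0))\<^sup>2 \<le> integral {0..2*pi} (\<lambda>t. (cmod (h (r * cis t)))\<^sup>2)"
    using integral_unique[OF I] by (simp add: g_def norm_mult norm_power)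
  have N: "(\<integral>\<^sup>+ \<theta>. indicator {0..2*pi} \<theta> * ennreal ((cmod (h (complex_of_real r * cis \<theta>)))\<^sup>2) \<partial>lborel)
        = ennreal (integral {0..2*pi} (\<lambda>t. (cmod (h (r * cis t)))\<^sup>2))"
  proof -
    have "(\<integral>\<^sup>+ \<theta>. indicator {0..2*pi} \<theta> * ennreal ((cmod (h (complex_of_real r * cis \<theta>)))\<^sup>2) \<partial>lborel)
       = (\<integral>\<^sup>+ \<theta>. ennreal (indicator {0..2*pi} \<theta> * (cmod (h (complex_of_real r * cis \<theta>)))\<^sup>2) \<partial>lborel)"
      by (intro nn_integral_cong) (auto simp: indicator_def)
    also have "\<dots> = ennreal (integral {0..2*pi} (\<lambda>t. (cmod (h (r * cis t)))\<^sup>2))"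
      by (rule nn_integral_has_integral_lebesgue) (use intG in auto)
    finally show ?thesis .
  qed
  have "ennreal ((cmod (h 0))\<^sup>2) = ennreal (1/(2*pi)) * ennreal (2 * pi * (cmod (h 0))\<^sup>2)"
    by (simp add: ennreal_mult'[symmetric])
  also have "\<dots> \<le> ennreal (1/(2*pi)) * ennreal (integral {0..2*pi} (\<lambda>t. (cmod (h (r * cis t)))\<^sup>2))"
    by (intro mult_left_mono ennreal_leI le) auto
  finally show ?thesis using N by simp
qed

lemma linepath_contour_param:
  fixes K :: "complex \<Rightarrow> real \<Rightarrow> complex"
  assumes cont: "continuous_on (S \<times> {a..b}) (\<lambda>(w,t). K w t)"
      and seg: "closed_segment p q \<subseteq> S"
  shows "contour_integral (linepath p q) (\<lambda>w. integral {a..b} (K w))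
         = integral {a..b} (\<lambda>t. integral {0..1} (\<lambda>s. K (linepath p q s) t * (q - p)))"
    and "continuous_on {a..b} (\<lambda>t. integral {0..1} (\<lambda>s. K (linepath p q s) t * (q - p)))"
proof -
  have c2: "continuous_on (cbox (0,a) (1,b)) (\<lambda>(s,t). K (linepath p q s) t * (q - p))"
  proof -
    have "continuous_on (cbox (0,a) (1,b)) ((\<lambda>(w,t). K w t) \<circ> (\<lambda>(s,t). (linepath p q s, t)))"
    proof (rule continuous_on_compose)
      show "continuous_on (cbox (0, a) (1, b)) (\<lambda>(s, t). (linepath p q s, t))"
        unfolding case_prod_unfold linepath_def by (intro continuous_intros)
      have "(\<lambda>(s, t). (linepath p q s, t)) ` cbox (0, a) (1, b) \<subseteq> S \<times> {a..b}"
        using seg linepath_in_path[of _ p q] by (auto simp: cbox_Pair_eq)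
      then show "continuous_on ((\<lambda>(s, t). (linepath p q s, t)) ` cbox (0, a) (1, b)) (\<lambda>(w, t). K w t)"
        by (rule continuous_on_subset[OF cont])
    qed
    then show ?thesis
      by (auto simp: o_def case_prod_unfold intro!: continuous_intros)
  qed
  have "contour_integral (linepath p q) (\<lambda>w. integral {a..b} (K w))
      = integral {0..1} (\<lambda>s. integral {a..b} (K (linepath p q s)) * (q - p))"
    by (simp add: contour_integral_integral)
  also have "\<dots> = integral (cbox 0 1) (\<lambda>s. integral (cbox a b) (\<lambda>t. K (linepath p q s) t * (q - p)))"
    by simp
  also have "\<dots> = integral (cbox a b) (\<lambda>t. integral (cbox 0 1) (\<lambda>s. K (linepath p q s) t * (q - p)))"
    by (rule integral_swap_continuous) (use c2 in simp)
  finally show "contour_integral (linepath p q) (\<lambda>w. integral {a..b} (K w))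
         = integral {a..b} (\<lambda>t. integral {0..1} (\<lambda>s. K (linepath p q s) t * (q - p)))"
    by simp
  have "continuous_on {a..b} (\<lambda>t. integral (cbox 0 1) (\<lambda>s. K (linepath p q s) t * (q - p)))"
  proof (rule integral_continuous_on_param)
    have "continuous_on ({a..b} \<times> cbox 0 1) ((\<lambda>(s,t). K (linepath p q s) t * (q - p)) \<circ> prod.swap)"
      by (rule continuous_on_compose[OF continuous_on_swap]) (use c2 in \<open>auto simp: cbox_Pair_eq intro: continuous_on_subset\<close>)
    then show "continuous_on ({a..b} \<times> cbox 0 1) (\<lambda>(t, s). K (linepath p q s) t * (q - p))"
      by (simp add: o_def case_prod_unfold prod.swap_def)
  qed
  then show "continuous_on {a..b} (\<lambda>t. integral {0..1} (\<lambda>s. K (linepath p q s) t * (q - p)))"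
    by simp
qed

lemma param_holo:
  fixes K :: "complex \<Rightarrow> real \<Rightarrow> complex"
  assumes S: "open S"
      and cont: "continuous_on (S \<times> {a..b}) (\<lambda>(w,t). K w t)"
      and hol: "\<And>t. t \<in> {a..b} \<Longrightarrow> (\<lambda>w. K w t) holomorphic_on S"
  shows "(\<lambda>w. integral {a..b} (K w)) holomorphic_on S"
proof -
  have contG: "continuous_on S (\<lambda>w. integral {a..b} (K w))"
    using integral_continuous_on_param[of S a b K] cont by simp
  have "(\<lambda>w. integral {a..b} (K w)) analytic_on S"
  proof (rule Morera_triangle[OF contG S], intro impI)
    fix p q r assume hull: "convex hull {p, q, r} \<subseteq> S"
    have segs: "closed_segment p q \<subseteq> S" "closed_segment q r \<subseteq> S" "closed_segment r p \<subseteq> S"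
    proof -
      have "convex hull {p, q} \<subseteq> convex hull {p,q,r}" "convex hull {q, r} \<subseteq> convex hull {p,q,r}"
           "convex hull {r, p} \<subseteq> convex hull {p,q,r}"
        by (intro hull_mono; auto)+
      then show "closed_segment p q \<subseteq> S" "closed_segment q r \<subseteq> S" "closed_segment r p \<subseteq> S"
        using hull by (auto simp: segment_convex_hull)
    qed
    define \<phi> where "\<phi> = (\<lambda>p q t. integral {0..1} (\<lambda>s. K (linepath p q s) t * (q - p)))"
    note L1 = linepath_contour_param[OF cont segs(1), folded \<phi>_def]
    note L2 = linepath_contour_param[OF cont segs(2), folded \<phi>_def]
    note L3 = linepath_contour_param[OF cont segs(3), folded \<phi>_def]
    have i1: "\<phi> p q integrable_on {a..b}" unfolding \<phi>_def using L1(2) by (rule integrable_continuous_real)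
    have i2: "\<phi> q r integrable_on {a..b}" unfolding \<phi>_def using L2(2) by (rule integrable_continuous_real)
    have i3: "\<phi> r p integrable_on {a..b}" unfolding \<phi>_def using L3(2) by (rule integrable_continuous_real)
    have zero: "\<phi> p q t + \<phi> q r t + \<phi> r p t = 0" if t: "t \<in> {a..b}" for t
    proof -
      have "(\<lambda>w. K w t) holomorphic_on convex hull {p, q, r}"
        using hol[OF t] hull by (rule holomorphic_on_subset)
      then have "contour_integral (linepath p q) (\<lambda>w. K w t) + contour_integral (linepath q r) (\<lambda>w. K w t)
                 + contour_integral (linepath r p) (\<lambda>w. K w t) = 0"
        by (intro has_chain_integral_chain_integral3 Cauchy_theorem_triangle)
      then show ?thesis
        by (simp add: \<phi>_def contour_integral_integral)
    qed
    have "contour_integral (linepath p q) (\<lambda>w. integral {a..b} (K w)) +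
          contour_integral (linepath q r) (\<lambda>w. integral {a..b} (K w)) +
          contour_integral (linepath r p) (\<lambda>w. integral {a..b} (K w))
        = integral {a..b} (\<phi> p q) + integral {a..b} (\<phi> q r) + integral {a..b} (\<phi> r p)"
      using L1(1) L2(1) L3(1) unfolding \<phi>_def by (simp only:)
    also have "\<dots> = integral {a..b} (\<lambda>t. \<phi> p q t + \<phi> q r t + \<phi> r p t)"
      using i1 i2 i3 by (simp add: integral_add integrable_add)
    also have "\<dots> = integral {a..b} (\<lambda>t. 0)"
      by (rule integral_cong) (use zero in auto)
    finally show "contour_integral (linepath p q) (\<lambda>w. integral {a..b} (K w)) +
          contour_integral (linepath q r) (\<lambda>w. integral {a..b} (K w)) +
          contour_integral (linepath r p) (\<lambda>w. integral {a..b} (K w)) = 0" by simp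
  qed
  then show ?thesis by (rule analytic_imp_holomorphic)
qed

definition Kf :: "(complex \<times> complex \<Rightarrow> complex) \<Rightarrow> real \<Rightarrow> complex \<Rightarrow> complex \<Rightarrow> real \<Rightarrow> complex" where
  "Kf f \<rho> z w t = f (of_real \<rho> * cis t, w) / (of_real \<rho> * cis t - z)^2 * of_real \<rho> * \<i> * cis t"

lemma deriv_formula:
  assumes f: "holo2 f" and \<rho>: "0 < \<rho>" "\<rho> < 1" and z: "z \<in> ball 0 \<rho>" and w: "w \<in> ball 0 1"
  shows "deriv (\<lambda>u. f (u, w)) z = 1 / (2 * of_real pi * \<i>) * integral {0..2*pi} (Kf f \<rho> z w)"
proof -
  have hol: "(\<lambda>u. f (u, w)) holomorphic_on ball 0 1" using f w by (auto simp: holo2_def)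
  have sub: "cball 0 \<rho> \<subseteq> ball (0::complex) 1" using \<rho> by auto
  then have sub2: "ball 0 \<rho> \<subseteq> ball (0::complex) 1" by auto
  have "((\<lambda>u. f (u, w)) has_field_derivative (1 / (2 * of_real pi * \<i>) *
          contour_integral (circlepath 0 \<rho>) (\<lambda>u. f (u, w) / (u - z)^2))) (at z)"
    by (rule Cauchy_derivative_integral_circlepath(2))
       (use hol sub sub2 z in \<open>auto intro: holomorphic_on_imp_continuous_on holomorphic_on_subset\<close>)
  then have "deriv (\<lambda>u. f (u, w)) z = 1 / (2 * of_real pi * \<i>) *
          contour_integral (circlepath 0 \<rho>) (\<lambda>u. f (u, w) / (u - z)^2)"
    by (rule DERIV_imp_deriv)
  also have "contour_integral (circlepath 0 \<rho>) (\<lambda>u. f (u, w) / (u - z)^2) = integral {0..2*pi} (Kf f \<rho> z w)"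
    unfolding circlepath_def
    by (subst contour_integral_part_circlepath_eq) (auto simp: Kf_def times_divide_eq_left intro!: integral_cong)
  finally show ?thesis .
qed

lemma Kf_cont:
  assumes f: "holo2 f" and \<rho>: "0 < \<rho>" "\<rho> < 1"
  shows "continuous_on ((ball 0 \<rho> \<times> ball 0 1) \<times> {0..2*pi}) (\<lambda>((z,w),t). Kf f \<rho> z w t)"
proof -
  have cf: "continuous_on (ball 0 1 \<times> ball 0 1) f" using f by (simp add: holo2_def)
  have c1: "continuous_on ((ball 0 \<rho> \<times> ball 0 1) \<times> {0..2*pi}) (\<lambda>p::(complex\<times>complex)\<times>real. f (of_real \<rho> * cis (snd p), snd (fst p)))"
  proof -
    have i1: "continuous_on ((ball 0 \<rho> \<times> ball 0 1) \<times> {0..2*pi}) (\<lambda>p::(complex\<times>complex)\<times>real. (complex_of_real \<rho> * cis (snd p), snd (fst p)))"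
      by (intro continuous_intros)
    have i2: "(\<lambda>p::(complex\<times>complex)\<times>real. (complex_of_real \<rho> * cis (snd p), snd (fst p))) ` ((ball 0 \<rho> \<times> ball 0 1) \<times> {0..2*pi}) \<subseteq> ball 0 1 \<times> ball 0 1"
      using \<rho> by (auto simp: norm_mult)
    show ?thesis using continuous_on_compose2[OF cf i1 i2] by simp
  qed
  have nz: "(complex_of_real \<rho> * cis (snd p) - fst (fst p))^2 \<noteq> 0"
    if "p \<in> (ball 0 \<rho> \<times> ball 0 1) \<times> {0..2*pi}" for p :: "(complex\<times>complex)\<times>real"
  proof
    assume "(complex_of_real \<rho> * cis (snd p) - fst (fst p))^2 = 0"
    then have "fst (fst p) = complex_of_real \<rho> * cis (snd p)" by simp
    then have "norm (fst (fst p)) = \<rho>" using \<rho> by (simp add: norm_mult)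
    moreover have "norm (fst (fst p)) < \<rho>" using that by auto
    ultimately show False by simp
  qed
  have "continuous_on ((ball 0 \<rho> \<times> ball 0 1) \<times> {0..2*pi})
          (\<lambda>p. f (of_real \<rho> * cis (snd p), snd (fst p)) / (of_real \<rho> * cis (snd p) - fst (fst p))^2 * of_real \<rho> * \<i> * cis (snd p))"
    by (intro continuous_intros c1) (use nz in auto)
  then show ?thesis by (simp add: Kf_def case_prod_unfold)
qed

lemma D_holo:
  assumes f: "holo2 f" and z: "z \<in> ball 0 1"
  shows "(\<lambda>w. deriv (\<lambda>u. f (u, w)) z) holomorphic_on ball 0 1"
proof -
  define \<rho> where "\<rho> = (1 + norm z) / 2"
  have n0: "0 \<le> norm z" by simp
  have \<rho>: "0 < \<rho>" "\<rho> < 1" and z\<rho>: "z \<in> ball 0 \<rho>" using z n0 unfolding \<rho>_def by (simp_all, linarith+)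
  have c: "continuous_on (ball 0 1 \<times> {0..2*pi}) (\<lambda>(w,t). Kf f \<rho> z w t)"
  proof -
    have "continuous_on (ball 0 1 \<times> {0..2*pi}) ((\<lambda>((z,w),t). Kf f \<rho> z w t) \<circ> (\<lambda>(w,t). ((z,w),t)))"
      by (rule continuous_on_compose[OF _ continuous_on_subset[OF Kf_cont[OF f \<rho>]]])
         (use z\<rho> in \<open>auto simp: case_prod_unfold intro!: continuous_intros\<close>)
    then show ?thesis by (simp add: o_def case_prod_unfold)
  qed
  have h: "(\<lambda>w. Kf f \<rho> z w t) holomorphic_on ball 0 1" if "t \<in> {0..2*pi}" for t
  proof -
    have "(\<lambda>w. f (of_real \<rho> * cis t, w)) holomorphic_on ball 0 1"
      using f \<rho> by (auto simp: holo2_def norm_mult)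
    moreover have "(complex_of_real \<rho> * cis t - z)\<^sup>2 \<noteq> 0"
    proof
      assume "(complex_of_real \<rho> * cis t - z)\<^sup>2 = 0"
      then have "z = complex_of_real \<rho> * cis t" by simp
      then have "norm z = \<rho>" using \<rho> by (simp add: norm_mult)
      with z\<rho> show False by simp
    qed
    ultimately show ?thesis unfolding Kf_def by (intro holomorphic_intros)
  qed
  have "(\<lambda>w. 1 / (2 * of_real pi * \<i>) * integral {0..2*pi} (Kf f \<rho> z w)) holomorphic_on ball 0 1"
    by (intro holomorphic_intros param_holo[OF open_ball c h])
  then show ?thesis
    by (rule holomorphic_transform) (use deriv_formula[OF f \<rho> z\<rho>] in auto)
qed

lemma D_cont:
  assumes f: "holo2 f"
  shows "continuous_on (ball 0 1 \<times> ball 0 1) (\<lambda>(z,w). deriv (\<lambda>u. f (u, w)) z)"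
proof -
  have "continuous_on (ball 0 \<rho> \<times> ball 0 1) (\<lambda>(z,w). deriv (\<lambda>u. f (u, w)) z)"
    if \<rho>: "0 < \<rho>" "\<rho> < 1" for \<rho>
  proof -
    have "continuous_on (ball 0 \<rho> \<times> ball 0 1) (\<lambda>x. integral (cbox 0 (2*pi)) ((\<lambda>(z,w) t. Kf f \<rho> z w t) x))"
      by (rule integral_continuous_on_param) (use Kf_cont[OF f \<rho>] in \<open>simp add: case_prod_unfold\<close>)
    then have "continuous_on (ball 0 \<rho> \<times> ball 0 1) (\<lambda>x. 1 / (2 * of_real pi * \<i>) * integral {0..2*pi} ((\<lambda>(z,w) t. Kf f \<rho> z w t) x))"
      by (intro continuous_intros) simp
    then show ?thesis
      by (rule continuous_on_eq) (use deriv_formula[OF f \<rho>] in auto)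
  qed
  then have "continuous_on (\<Union>\<rho>\<in>{0<..<1}. ball 0 \<rho> \<times> ball 0 1) (\<lambda>(z,w). deriv (\<lambda>u. f (u, w)) z)"
    by (intro continuous_on_open_UN) (auto intro: open_Times)
  moreover have "(\<Union>\<rho>\<in>{0<..<1}. ball 0 \<rho> \<times> ball 0 1) = ball (0::complex) 1 \<times> ball (0::complex) 1"
  proof safe
    fix z w :: complex assume "z \<in> ball 0 1" "w \<in> ball 0 1"
    then show "(z, w) \<in> (\<Union>\<rho>\<in>{0<..<1}. ball 0 \<rho> \<times> ball 0 1)"
    proof (intro UN_I[of "(1 + norm z)/2"])
      have n0: "0 \<le> norm z" by simp
      show "(1 + cmod z) / 2 \<in> {0<..<1}" using n0 \<open>z \<in> ball 0 1\<close> by (simp; linarith)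
      show "(z, w) \<in> ball 0 ((1 + cmod z) / 2) \<times> ball 0 1" using n0 \<open>z \<in> ball 0 1\<close> \<open>w \<in> ball 0 1\<close> by (simp; linarith)
    qed
  qed auto
  ultimately show ?thesis by simp
qed

lemma Poisson_meas:
  assumes "Mplus_T \<mu>"
  shows "Poisson \<mu> \<in> borel_measurable borel"
proof -
  have sets: "sets \<mu> = sets (borel :: complex measure)" and fin: "finite_measure \<mu>"
    using assms by (auto simp: Mplus_T_def)
  interpret finite_measure \<mu> by (rule fin)
  have m0: "(\<lambda>p::complex\<times>complex. ennreal ((1 - (cmod (fst p))\<^sup>2) / (cmod (fst p - snd p))\<^sup>2)) \<in> borel_measurable borel"
  proof -
    have n[measurable]: "(\<lambda>p::complex\<times>complex. 1 - (cmod (fst p))\<^sup>2) \<in> borel_measurable borel"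
      by (intro borel_measurable_continuous_onI continuous_intros)
    have d[measurable]: "(\<lambda>p::complex\<times>complex. (cmod (fst p - snd p))\<^sup>2) \<in> borel_measurable borel"
      by (intro borel_measurable_continuous_onI continuous_intros)
    show ?thesis by measurable
  qed
  have "sets ((borel :: complex measure) \<Otimes>\<^sub>M \<mu>) = sets ((borel :: complex measure) \<Otimes>\<^sub>M (borel :: complex measure))"
    using sets by (intro sets_pair_measure_cong) auto
  also have "\<dots> = sets (borel :: (complex \<times> complex) measure)"
    by (rule arg_cong[where f=sets, OF borel_prod])
  finally have "(\<lambda>p::complex\<times>complex. ennreal ((1 - (cmod (fst p))\<^sup>2) / (cmod (fst p - snd p))\<^sup>2)) \<in> borel_measurable (borel \<Otimes>\<^sub>M \<mu>)"
    using m0 by (simp cong: measurable_cong_sets)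
  then have "(\<lambda>w. \<integral>\<^sup>+ \<zeta>. ennreal ((1 - (cmod w)\<^sup>2) / (cmod (w - \<zeta>))\<^sup>2) \<partial>\<mu>) \<in> borel_measurable borel"
    by (intro borel_measurable_nn_integral) (simp add: case_prod_unfold)
  then show ?thesis by (simp add: Poisson_def[abs_def])
qed

lemma E_meas:
  assumes f: "holo2 f" and r: "0 < r" "r < 1"
  shows "(\<lambda>(\<theta>::real, z::complex). indicator (ball 0 1) z * ennreal ((cmod (deriv (\<lambda>u. f (u, complex_of_real r * cis \<theta>)) z))\<^sup>2))
           \<in> borel_measurable borel"
proof -
  have c: "continuous_on (UNIV \<times> ball 0 1) (\<lambda>p::real\<times>complex. (cmod (deriv (\<lambda>u. f (u, complex_of_real r * cis (fst p))) (snd p)))\<^sup>2)"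
  proof -
    have "continuous_on (UNIV \<times> ball 0 1) ((\<lambda>(z,w). deriv (\<lambda>u. f (u, w)) z) \<circ> (\<lambda>p::real\<times>complex. (snd p, complex_of_real r * cis (fst p))))"
    proof (rule continuous_on_compose[OF _ continuous_on_subset[OF D_cont[OF f]]])
      show "continuous_on (UNIV \<times> ball 0 1) (\<lambda>p::real\<times>complex. (snd p, complex_of_real r * cis (fst p)))"
        by (intro continuous_intros)
      show "(\<lambda>p::real\<times>complex. (snd p, complex_of_real r * cis (fst p))) ` (UNIV \<times> ball 0 1) \<subseteq> ball 0 1 \<times> ball 0 1"
        using r by (auto simp: norm_mult)
    qed
    then have "continuous_on (UNIV \<times> ball 0 1) (\<lambda>p::real\<times>complex. deriv (\<lambda>u. f (u, complex_of_real r * cis (fst p))) (snd p))"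
      by (simp add: o_def)
    then show ?thesis by (intro continuous_intros)
  qed
  have "(\<lambda>p::real\<times>complex. indicator (UNIV \<times> ball 0 1) p *\<^sub>R (cmod (deriv (\<lambda>u. f (u, complex_of_real r * cis (fst p))) (snd p)))\<^sup>2) \<in> borel_measurable borel"
    by (rule borel_measurable_continuous_on_indicator[OF _ c]) (auto intro: open_Times borel_open)
  then have "(\<lambda>p::real\<times>complex. ennreal (indicator (UNIV \<times> ball 0 1) p *\<^sub>R (cmod (deriv (\<lambda>u. f (u, complex_of_real r * cis (fst p))) (snd p)))\<^sup>2)) \<in> borel_measurable borel"
    by measurable
  then show ?thesis
    by (rule measurable_cong[THEN iffD1, rotated]) (auto simp: indicator_def)
qed

lemma Dint1_restr1_le:
  assumes f: "holo2 f" and \<mu>: "Mplus_T \<mu>" and r: "0 < r" "r < 1"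
  shows "Dint1 \<mu> (restr1 f) r' \<le> Dint1 \<mu> f r"
proof -
  define E where "E = (\<lambda>\<theta> z. indicator (ball 0 1) z * ennreal ((cmod (deriv (\<lambda>u. f (u, complex_of_real r * cis \<theta>)) z))\<^sup>2))"
  define E0 where "E0 = (\<lambda>z. ennreal ((cmod (deriv (\<lambda>u. f (u, 0)) z))\<^sup>2))"
  define P where "P = Poisson \<mu>"
  define c1 where "c1 = ennreal (1/(2*pi))"
  define c2 where "c2 = ennreal (1/pi)"
  define G where "G = (\<lambda>\<theta> z. indicator {0..2*pi} \<theta> * (E \<theta> z * P z))"
  have Pm[measurable]: "P \<in> borel_measurable lborel"
    unfolding P_def using Poisson_meas[OF \<mu>] by simp
  have Em[measurable]: "(\<lambda>p. E (fst p) (snd p)) \<in> borel_measurable (lborel \<Otimes>\<^sub>M lborel)"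
    using E_meas[OF f r] unfolding E_def by (simp add: case_prod_unfold lborel_prod)
  have Gm[measurable]: "(\<lambda>p. G (fst p) (snd p)) \<in> borel_measurable (lborel \<Otimes>\<^sub>M lborel)"
    unfolding G_def by measurable
  have Gs[measurable]: "(\<lambda>p. G (snd p) (fst p)) \<in> borel_measurable (lborel \<Otimes>\<^sub>M lborel)"
    using measurable_comp[OF measurable_pair_swap' Gm] by (simp add: o_def case_prod_unfold)
  have Hm: "(\<lambda>\<theta>. \<integral>\<^sup>+ z. G \<theta> z \<partial>lborel) \<in> borel_measurable lborel"
    by measurable
  have Jm: "(\<lambda>z. \<integral>\<^sup>+ \<theta>. G \<theta> z \<partial>lborel) \<in> borel_measurable lborel"
    by measurable
  have LHS: "Dint1 \<mu> (restr1 f) r' = c2 * (\<integral>\<^sup>+ z. indicator (ball 0 1) z * E0 z * P z \<partial>lborel)"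
  proof -
    define X where "X = (\<integral>\<^sup>+ z. indicator (ball 0 1) z * E0 z * P z \<partial>lborel)"
    have "Dint1 \<mu> (restr1 f) r' = c1 * (\<integral>\<^sup>+ \<theta>. (c2 * X) * indicator {0..2*pi} \<theta> \<partial>lborel)"
      unfolding Dint1_def restr1_def c1_def c2_def X_def E0_def P_def
      by (simp add: mult.commute)
    also have "\<dots> = c1 * ((c2 * X) * ennreal (2 * pi))"
      by (subst nn_integral_cmult_indicator) auto
    also have "\<dots> = c2 * X"
    proof -
      have "c1 * ennreal (2 * pi) = 1"
        unfolding c1_def by (subst ennreal_mult'[symmetric]) auto
      then show ?thesis by (metis mult.commute mult.left_commute mult_1)
    qed
    finally show ?thesis unfolding X_def .
  qed
  have "Dint1 \<mu> f r = c1 * (\<integral>\<^sup>+ \<theta>. c2 * (\<integral>\<^sup>+ z. G \<theta> z \<partial>lborel) \<partial>lborel)"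
  proof -
    have "indicator {0..2*pi} \<theta> * (c2 * (\<integral>\<^sup>+ z. E \<theta> z * P z \<partial>lborel)) = c2 * (\<integral>\<^sup>+ z. G \<theta> z \<partial>lborel)" for \<theta>
      by (cases "\<theta> \<in> {0..2*pi}") (auto simp: G_def)
    then show ?thesis
      unfolding Dint1_def c1_def c2_def E_def P_def by simp
  qed
  also have "\<dots> = c1 * (c2 * (\<integral>\<^sup>+ \<theta>. (\<integral>\<^sup>+ z. G \<theta> z \<partial>lborel) \<partial>lborel))"
    using Hm by (simp add: nn_integral_cmult)
  also have "(\<integral>\<^sup>+ \<theta>. (\<integral>\<^sup>+ z. G \<theta> z \<partial>lborel) \<partial>lborel) = (\<integral>\<^sup>+ z. (\<integral>\<^sup>+ \<theta>. G \<theta> z \<partial>lborel) \<partial>lborel)"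
    by (rule lborel_pair.Fubini'[symmetric]) (use Gm in \<open>simp add: case_prod_unfold\<close>)
  also have "c1 * (c2 * (\<integral>\<^sup>+ z. (\<integral>\<^sup>+ \<theta>. G \<theta> z \<partial>lborel) \<partial>lborel)) = c2 * (\<integral>\<^sup>+ z. c1 * (\<integral>\<^sup>+ \<theta>. G \<theta> z \<partial>lborel) \<partial>lborel)"
    using Jm by (simp add: nn_integral_cmult mult.left_commute)
  finally have RHS: "Dint1 \<mu> f r = c2 * (\<integral>\<^sup>+ z. c1 * (\<integral>\<^sup>+ \<theta>. G \<theta> z \<partial>lborel) \<partial>lborel)" .
  have pt: "indicator (ball 0 1) z * E0 z * P z \<le> c1 * (\<integral>\<^sup>+ \<theta>. G \<theta> z \<partial>lborel)" for z
  proof (cases "z \<in> ball 0 1")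
    case False then show ?thesis by simp
  next
    case True
    have hm: "(\<lambda>\<theta>. indicator {0..2*pi} \<theta> * ennreal ((cmod (deriv (\<lambda>u. f (u, complex_of_real r * cis \<theta>)) z))\<^sup>2)) \<in> borel_measurable lborel"
    proof -
      have "(\<lambda>\<theta>. E \<theta> z) \<in> borel_measurable lborel"
        using measurable_Pair1[OF Em, of z] by simp
      then have "(\<lambda>\<theta>. indicator {0..2*pi} \<theta> * E \<theta> z) \<in> borel_measurable lborel"
        by measurable
      then show ?thesis using True by (simp add: E_def)
    qed
    have "(\<integral>\<^sup>+ \<theta>. G \<theta> z \<partial>lborel) = (\<integral>\<^sup>+ \<theta>. indicator {0..2*pi} \<theta> * ennreal ((cmod (deriv (\<lambda>u. f (u, complex_of_real r * cis \<theta>)) z))\<^sup>2) * P z \<partial>lborel)"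
      using True by (intro nn_integral_cong) (simp add: G_def E_def mult.assoc)
    also have "\<dots> = (\<integral>\<^sup>+ \<theta>. indicator {0..2*pi} \<theta> * ennreal ((cmod (deriv (\<lambda>u. f (u, complex_of_real r * cis \<theta>)) z))\<^sup>2) \<partial>lborel) * P z"
      using hm by (rule nn_integral_multc)
    finally have eq: "c1 * (\<integral>\<^sup>+ \<theta>. G \<theta> z \<partial>lborel) = (c1 * (\<integral>\<^sup>+ \<theta>. indicator {0..2*pi} \<theta> * ennreal ((cmod (deriv (\<lambda>u. f (u, complex_of_real r * cis \<theta>)) z))\<^sup>2) \<partial>lborel)) * P z"
      by (simp add: mult.assoc)
    have "E0 z \<le> c1 * (\<integral>\<^sup>+ \<theta>. indicator {0..2*pi} \<theta> * ennreal ((cmod (deriv (\<lambda>u. f (u, complex_of_real r * cis \<theta>)) z))\<^sup>2) \<partial>lborel)"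
      unfolding E0_def c1_def
      using sub_mean[OF D_holo[OF f True] r] by simp
    then show ?thesis using True by (simp add: eq mult_right_mono)
  qed
  have "Dint1 \<mu> (restr1 f) r' \<le> c2 * (\<integral>\<^sup>+ z. c1 * (\<integral>\<^sup>+ \<theta>. G \<theta> z \<partial>lborel) \<partial>lborel)"
    unfolding LHS by (intro mult_left_mono nn_integral_mono pt) auto
  then show ?thesis using RHS by simp
qed

lemma Dspace_holo2: "f \<in> Dspace \<mu>1 \<mu>2 \<Longrightarrow> holo2 f"
  by (auto simp: Dspace_def inH2_def split: if_splits)

lemma restr_main:
  assumes \<mu>: "Mplus_T \<mu>1" "Mplus_T \<mu>2" and fD: "f \<in> Dspace \<mu>1 \<mu>2"
  shows "restr1 f \<in> Dspace \<mu>1 \<mu>2 \<and> restr2 f \<in> Dspace \<mu>1 \<mu>2 \<and>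
           Dnorm2 \<mu>1 \<mu>2 (restr1 f) \<le> Dnorm2 \<mu>1 \<mu>2 f \<and>
           Dnorm2 \<mu>1 \<mu>2 (restr2 f) \<le> Dnorm2 \<mu>1 \<mu>2 f"
proof -
  have f: "holo2 f" using fD by (rule Dspace_holo2)
  have fin: "Dmu \<mu>1 \<mu>2 f < \<infinity>" using fD by (simp add: Dspace_def)
  have H2fin: "H2norm2 f < \<infinity>" if "zero_meas \<mu>1 \<or> zero_meas \<mu>2"
    using fD that by (simp add: Dspace_def inH2_def)
  have D1: "Dmu \<mu>1 \<mu>2 (restr1 f) \<le> Dmu \<mu>1 \<mu>2 f"
  proof -
    have "Dmu \<mu>1 \<mu>2 (restr1 f) = (SUP r\<in>{0<..<1}. Dint1 \<mu>1 (restr1 f) r)"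
      by (simp add: Dmu_def Dint2_restr1)
    also have "\<dots> \<le> (SUP r\<in>{0<..<1}. Dint1 \<mu>1 f r)"
      by (rule SUP_mono) (use Dint1_restr1_le[OF f \<mu>(1)] in auto)
    also have "\<dots> \<le> Dmu \<mu>1 \<mu>2 f"
      by (simp add: Dmu_def)
    finally show ?thesis .
  qed
  have D2: "Dmu \<mu>1 \<mu>2 (restr2 f) \<le> Dmu \<mu>1 \<mu>2 f"
  proof -
    have sf: "holo2 (swp f)" using f by (rule holo2_swp)
    have "Dmu \<mu>1 \<mu>2 (restr2 f) = (SUP r\<in>{0<..<1}. Dint1 \<mu>2 (restr1 (swp f)) r)"
      by (simp add: Dmu_def Dint1_restr2 Dint2_restr2)
    also have "\<dots> \<le> (SUP r\<in>{0<..<1}. Dint1 \<mu>2 (swp f) r)"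
      by (rule SUP_mono) (use Dint1_restr1_le[OF sf \<mu>(2)] in auto)
    also have "\<dots> = (SUP r\<in>{0<..<1}. Dint2 \<mu>2 f r)"
      by (simp add: Dint2_swp)
    also have "\<dots> \<le> Dmu \<mu>1 \<mu>2 f"
      by (simp add: Dmu_def)
    finally show ?thesis .
  qed
  have m1: "restr1 f \<in> Dspace \<mu>1 \<mu>2"
    using holo2_restr1[OF f] D1 fin H2_restr1[of f] H2fin
    by (auto simp: Dspace_def inH2_def intro: le_less_trans)
  have m2: "restr2 f \<in> Dspace \<mu>1 \<mu>2"
    using holo2_restr2[OF f] D2 fin H2_restr2[of f] H2fin
    by (auto simp: Dspace_def inH2_def intro: le_less_trans)
  show ?thesis
    using m1 m2 D1 D2 H2_restr1[of f] H2_restr2[of f]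
    by (auto simp: Dnorm2_def intro: add_mono)
qed

theorem lemma5p4:
  fixes \<mu>1 \<mu>2 :: "complex measure"
  assumes "Mplus_T \<mu>1" and "Mplus_T \<mu>2"
  shows "(\<forall>f\<in>Dspace \<mu>1 \<mu>2.
           restr1 f \<in> Dspace \<mu>1 \<mu>2 \<and> restr2 f \<in> Dspace \<mu>1 \<mu>2 \<and>
           Dnorm2 \<mu>1 \<mu>2 (restr1 f) \<le> Dnorm2 \<mu>1 \<mu>2 f \<and>
           Dnorm2 \<mu>1 \<mu>2 (restr2 f) \<le> Dnorm2 \<mu>1 \<mu>2 f)
       \<and> (\<forall>f\<in>Dspace \<mu>1 \<mu>2. \<forall>g\<in>Dspace \<mu>1 \<mu>2. \<forall>c::complex.
           restr1 (\<lambda>z. c * f z + g z) = (\<lambda>z. c * restr1 f z + restr1 g z) \<and>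
           restr2 (\<lambda>z. c * f z + g z) = (\<lambda>z. c * restr2 f z + restr2 g z) \<and>
           restr1 (\<lambda>z. f z * g z) = (\<lambda>z. restr1 f z * restr1 g z) \<and>
           restr2 (\<lambda>z. f z * g z) = (\<lambda>z. restr2 f z * restr2 g z))"
  using restr_main[OF assms] by (auto simp: restr1_def restr2_def fun_eq_iff)

end
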